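(* Let $c\ge 0$ be a constant integer and let $f:\{0,1\}^n\to\{0,1\}^{n+c}$ be computable by polynomial-size circuits. Let $T_1(n)=\{x\in\{0,1\}^n: |f^{-1}(f(x))|=1\}$. If there exist a polynomial $p$ and infinitely many $n$ such that $$\frac{|T_1(n)|}{2^n}\ \ge\ \frac{2^{1+c}}{2^{1+c}+1}+\frac{1}{p(n)},$$ then $f$ does not have a super-core. In particular, for length-preserving $f$ ($c=0$) the condition reads $|T_1(n)|/2^n\ge 2/3+1/p(n)$.
   Context: A predicate $b$ computable by polynomial-size circuits is a super-core of $f:\{0,1\}^n\to\{0,1\}^{m(n)}$ if there do not exist a nondeterministic polynomial-size circuit family $\mathcal{A}_1$ (accepting iff some witness gives output 1), a co-nondeterministic polynomial-size circuit family $\mathcal{A}_2$ (rejecting iff some witness gives output 0), a polynomial $p$ and infinitely many $n$ such that either $\Pr_{x\in\{0,1\}^n}[\mathcal{A}_1(f(x),1^n)=b(x)=0]+\tfrac12\Pr_{y\in\{0,1\}^{m(n)}}[\mathcal{A}_1(y,1^n)=1]\ge \tfrac12+\tfrac1{p(n)}$ or $\Pr_{x}[\mathcal{A}_2(f(x),1^n)=b(x)=1]+\tfrac12\Pr_{y}[\mathcal{A}_2(y,1^n)=0]\ge \tfrac12+\tfrac1{p(n)}$ (uniform distributions). *)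

theory Defs
  imports Complex_Main
begin

text \<open>A circuit is a list of gates (wire i is the
output of gate i; gates may only reference earlier wires) together with a
list of output wires.\<close>

datatype gate = Input nat | Const bool | Not nat | And nat nat | Or nat nat

type_synonym circuit = "gate list \<times> nat list"

definition wire :: "bool list \<Rightarrow> nat \<Rightarrow> bool" where
  "wire ws i = (i < length ws \<and> ws ! i)"

fun gate_val :: "gate \<Rightarrow> bool list \<Rightarrow> bool list \<Rightarrow> bool" where
  "gate_val (Input i) x ws = (i < length x \<and> x ! i)"
| "gate_val (Const b) x ws = b"
| "gate_val (Not i) x ws = (\<not> wire ws i)"
| "gate_val (And i j) x ws = (wire ws i \<and> wire ws j)"
| "gate_val (Or i j) x ws = (wire ws i \<or> wire ws j)"

fun eval_gates :: "gate list \<Rightarrow> bool list \<Rightarrow> bool list \<Rightarrow> bool list" where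
  "eval_gates [] x ws = ws"
| "eval_gates (g # gs) x ws = eval_gates gs x (ws @ [gate_val g x ws])"

definition eval_circuit :: "circuit \<Rightarrow> bool list \<Rightarrow> bool list" where
  "eval_circuit C x = map (wire (eval_gates (fst C) x [])) (snd C)"

definition circuit_size :: "circuit \<Rightarrow> nat" where
  "circuit_size C = length (fst C) + length (snd C)"

text \<open>Single output bit of a decision circuit (malformed circuits output 0).\<close>
definition cbit :: "circuit \<Rightarrow> bool list \<Rightarrow> bool" where
  "cbit C x = (eval_circuit C x = [True])"

definition poly_bounded :: "(nat \<Rightarrow> nat) \<Rightarrow> bool" where
  "poly_bounded q \<longleftrightarrow> (\<exists>k. \<forall>n. q n \<le> n ^ k + k)"

definition pos_poly :: "(nat \<Rightarrow> nat) \<Rightarrow> bool" where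
  "pos_poly p \<longleftrightarrow> poly_bounded p \<and> (\<forall>n. p n > 0)"

definition bitstrings :: "nat \<Rightarrow> bool list set" where
  "bitstrings n = {x. length x = n}"

definition poly_circuit_fun :: "(bool list \<Rightarrow> bool list) \<Rightarrow> bool" where
  "poly_circuit_fun f \<longleftrightarrow> (\<exists>q. poly_bounded q \<and> (\<forall>n. \<exists>C. circuit_size C \<le> q n \<and>
      (\<forall>x\<in>bitstrings n. eval_circuit C x = f x)))"

definition poly_circuit_pred :: "(bool list \<Rightarrow> bool) \<Rightarrow> bool" where
  "poly_circuit_pred b \<longleftrightarrow> (\<exists>q. poly_bounded q \<and> (\<forall>n. \<exists>C. circuit_size C \<le> q n \<and>
      (\<forall>x\<in>bitstrings n. cbit C x = b x)))"

text \<open>Nondeterministic/co-nondeterministic circuit families: A n is the circuit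
used on inputs (y, 1^n); wl n is the witness length. The input of A n is y @ w.\<close>
definition poly_family :: "(nat \<Rightarrow> circuit) \<Rightarrow> bool" where
  "poly_family A \<longleftrightarrow> poly_bounded (\<lambda>n. circuit_size (A n))"

definition nd_accept :: "(nat \<Rightarrow> circuit) \<Rightarrow> (nat \<Rightarrow> nat) \<Rightarrow> nat \<Rightarrow> bool list \<Rightarrow> bool" where
  "nd_accept A wl n y \<longleftrightarrow> (\<exists>w\<in>bitstrings (wl n). cbit (A n) (y @ w))"

definition cond_accept :: "(nat \<Rightarrow> circuit) \<Rightarrow> (nat \<Rightarrow> nat) \<Rightarrow> nat \<Rightarrow> bool list \<Rightarrow> bool" where
  "cond_accept A wl n y \<longleftrightarrow> (\<forall>w\<in>bitstrings (wl n). cbit (A n) (y @ w))"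

definition prob_unif :: "nat \<Rightarrow> (bool list \<Rightarrow> bool) \<Rightarrow> real" where
  "prob_unif n P = real (card {x\<in>bitstrings n. P x}) / 2 ^ n"

definition super_core ::
  "(bool list \<Rightarrow> bool) \<Rightarrow> (bool list \<Rightarrow> bool list) \<Rightarrow> (nat \<Rightarrow> nat) \<Rightarrow> bool" where
  "super_core b f m \<longleftrightarrow> poly_circuit_pred b \<and>
     \<not> (\<exists>A1 wl1 A2 wl2 p. poly_family A1 \<and> poly_family A2 \<and> pos_poly p \<and>
          infinite {n.
             prob_unif n (\<lambda>x. \<not> nd_accept A1 wl1 n (f x) \<and> \<not> b x)
               + 1/2 * prob_unif (m n) (\<lambda>y. nd_accept A1 wl1 n y)
               \<ge> 1/2 + 1 / real (p n)
           \<or> prob_unif n (\<lambda>x. cond_accept A2 wl2 n (f x) \<and> b x)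
               + 1/2 * prob_unif (m n) (\<lambda>y. \<not> cond_accept A2 wl2 n y)
               \<ge> 1/2 + 1 / real (p n)})"

definition T1 :: "(bool list \<Rightarrow> bool list) \<Rightarrow> nat \<Rightarrow> bool list set" where
  "T1 f n = {x\<in>bitstrings n. card {x'\<in>bitstrings n. f x' = f x} = 1}"

end

theory Submission imports Defs begin

lemma eval_gates_append: "eval_gates (g1 @ g2) x ws = eval_gates g2 x (eval_gates g1 x ws)"
  by (induction g1 arbitrary: ws) auto

lemma eval_gates_prefix: "\<exists>ws'. eval_gates gs x ws = ws @ ws'"
  by (induction gs arbitrary: ws) (auto, metis append.assoc)

lemma eval_gates_length: "length (eval_gates gs x ws) = length ws + length gs"
  by (induction gs arbitrary: ws) auto

lemma wire_append: "i < length ws \<Longrightarrow> wire (ws @ ws') i = wire ws i"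
  by (auto simp: wire_def nth_append)

lemma wire_ge: "length ws \<le> i \<Longrightarrow> \<not> wire ws i"
  by (auto simp: wire_def)

fun shiftg :: "nat \<Rightarrow> nat \<Rightarrow> gate \<Rightarrow> gate" where
  "shiftg L k (Input i) = Input (i + k)"
| "shiftg L k (Const b) = Const b"
| "shiftg L k (Not i) = Not (i + L)"
| "shiftg L k (And i j) = And (i + L) (j + L)"
| "shiftg L k (Or i j) = Or (i + L) (j + L)"

lemma wire_shift: "length ws0 = L \<Longrightarrow> wire (ws0 @ ws) (i + L) = wire ws i"
  by (auto simp: wire_def nth_append)

lemma gate_val_shift: "length ws0 = L \<Longrightarrow>
   gate_val (shiftg L k g) x (ws0 @ ws) = gate_val g (drop k x) ws"
  by (cases g) (auto simp: wire_shift add.commute)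

lemma eval_shift: "length ws0 = L \<Longrightarrow>
  eval_gates (map (shiftg L k) gs) x (ws0 @ ws) = ws0 @ eval_gates gs (drop k x) ws"
proof (induction gs arbitrary: ws)
  case Nil then show ?case by simp
next
  case (Cons g gs)
  have "eval_gates (map (shiftg L k) (g # gs)) x (ws0 @ ws)
     = eval_gates (map (shiftg L k) gs) x (ws0 @ (ws @ [gate_val g (drop k x) ws]))"
    using Cons.prems by (simp add: gate_val_shift)
  also have "\<dots> = ws0 @ eval_gates gs (drop k x) (ws @ [gate_val g (drop k x) ws])"
    using Cons by blast
  finally show ?case by simp
qed

datatype fm = FIn nat | FW nat | FC bool | FNot fm | FAnd fm fm | FOr fm fm

fun feval :: "bool list \<Rightarrow> bool list \<Rightarrow> fm \<Rightarrow> bool" where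
  "feval x ws (FIn i) = (i < length x \<and> x ! i)"
| "feval x ws (FW i) = wire ws i"
| "feval x ws (FC b) = b"
| "feval x ws (FNot f) = (\<not> feval x ws f)"
| "feval x ws (FAnd f g) = (feval x ws f \<and> feval x ws g)"
| "feval x ws (FOr f g) = (feval x ws f \<or> feval x ws g)"

fun fok :: "nat \<Rightarrow> fm \<Rightarrow> bool" where
  "fok L (FW i) = (i < L)"
| "fok L (FNot f) = fok L f"
| "fok L (FAnd f g) = (fok L f \<and> fok L g)"
| "fok L (FOr f g) = (fok L f \<and> fok L g)"
| "fok L _ = True"

fun fsize :: "fm \<Rightarrow> nat" where
  "fsize (FNot f) = fsize f + 1"
| "fsize (FAnd f g) = fsize f + fsize g + 1"
| "fsize (FOr f g) = fsize f + fsize g + 1"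
| "fsize _ = 1"

fun comp :: "nat \<Rightarrow> fm \<Rightarrow> gate list \<times> nat" where
  "comp L (FIn i) = ([Input i], L)"
| "comp L (FW i) = (if i < L then ([], i) else ([Const False], L))"
| "comp L (FC b) = ([Const b], L)"
| "comp L (FNot f) = (let (g, u) = comp L f in (g @ [Not u], L + length g))"
| "comp L (FAnd f1 f2) = (let (g1, u1) = comp L f1; (g2, u2) = comp (L + length g1) f2
     in (g1 @ g2 @ [And u1 u2], L + length g1 + length g2))"
| "comp L (FOr f1 f2) = (let (g1, u1) = comp L f1; (g2, u2) = comp (L + length g1) f2
     in (g1 @ g2 @ [Or u1 u2], L + length g1 + length g2))"

lemma fok_mono: "fok L f \<Longrightarrow> L \<le> L' \<Longrightarrow> fok L' f"
  by (induction f) auto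

lemma feval_prefix: "fok (length ws) f \<Longrightarrow> feval x (ws @ ws') f = feval x ws f"
  by (induction f) (auto simp: wire_append)

lemma comp_out: "snd (comp L f) < L + length (fst (comp L f))"
  by (induction f arbitrary: L) (auto split: prod.splits)

lemma comp_size: "length (fst (comp L f)) \<le> fsize f"
proof (induction f arbitrary: L)
  case (FNot f)
  have "length (fst (comp L f)) \<le> fsize f" by (rule FNot.IH)
  then show ?case by (cases "comp L f") auto
next
  case (FAnd f1 f2)
  obtain g1 u1 where a: "comp L f1 = (g1, u1)" by fastforce
  obtain g2 u2 where b: "comp (L + length g1) f2 = (g2, u2)" by fastforce
  have "length g1 \<le> fsize f1" using FAnd.IH(1)[of L] a by simp
  moreover have "length g2 \<le> fsize f2" using FAnd.IH(2)[of "L + length g1"] b by simp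
  ultimately show ?case using a b by simp
next
  case (FOr f1 f2)
  obtain g1 u1 where a: "comp L f1 = (g1, u1)" by fastforce
  obtain g2 u2 where b: "comp (L + length g1) f2 = (g2, u2)" by fastforce
  have "length g1 \<le> fsize f1" using FOr.IH(1)[of L] a by simp
  moreover have "length g2 \<le> fsize f2" using FOr.IH(2)[of "L + length g1"] b by simp
  ultimately show ?case using a b by simp
qed auto

lemma comp_correct: "length ws = L \<Longrightarrow> fok L f \<Longrightarrow>
   wire (eval_gates (fst (comp L f)) x ws) (snd (comp L f)) = feval x ws f"
proof (induction f arbitrary: L ws)
  case (FIn i) then show ?case by (simp add: wire_def nth_append)
next
  case (FW i) then show ?case by simp
next
  case (FC b) then show ?case by (simp add: wire_def nth_append)
next
  case (FNot f)
  obtain g u where go: "comp L f = (g, u)" by fastforce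
  have "length (eval_gates g x ws) = L + length g" using FNot.prems by (simp add: eval_gates_length)
  moreover have "wire (eval_gates g x ws) u = feval x ws f" using FNot.IH[of ws L] FNot.prems go by simp
  ultimately show ?case using go by (simp add: eval_gates_append wire_def nth_append)
next
  case (FAnd f1 f2)
  obtain g1 u1 where go1: "comp L f1 = (g1, u1)" by fastforce
  define E1 where "E1 = eval_gates g1 x ws"
  have l1: "length E1 = L + length g1" using FAnd.prems by (simp add: E1_def eval_gates_length)
  obtain g2 u2 where go2: "comp (L + length g1) f2 = (g2, u2)" by fastforce
  define E12 where "E12 = eval_gates g2 x E1"
  have l12: "length E12 = L + length g1 + length g2" using l1 by (simp add: E12_def eval_gates_length)
  have u1: "u1 < length E1" using comp_out[of L f1] go1 l1 by simp
  obtain ws2 where e12: "E12 = E1 @ ws2" using eval_gates_prefix unfolding E12_def by blast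
  obtain ws1 where e1: "E1 = ws @ ws1" using eval_gates_prefix unfolding E1_def by blast
  have v1: "wire E12 u1 = feval x ws f1"
    using FAnd.IH(1)[of ws L] FAnd.prems go1 u1 e12 by (simp add: E1_def wire_append)
  have v2: "wire E12 u2 = feval x ws f2"
    using FAnd.IH(2)[of E1 "L + length g1"] FAnd.prems go2 l1 fok_mono[of L f2 "L + length g1"]
      feval_prefix[of ws f2 x ws1] e1 by (simp add: E12_def)
  show ?case using go1 go2 v1 v2 l12
    by (simp add: eval_gates_append E12_def[symmetric] E1_def[symmetric] wire_def nth_append)
next
  case (FOr f1 f2)
  obtain g1 u1 where go1: "comp L f1 = (g1, u1)" by fastforce
  define E1 where "E1 = eval_gates g1 x ws"
  have l1: "length E1 = L + length g1" using FOr.prems by (simp add: E1_def eval_gates_length)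
  obtain g2 u2 where go2: "comp (L + length g1) f2 = (g2, u2)" by fastforce
  define E12 where "E12 = eval_gates g2 x E1"
  have l12: "length E12 = L + length g1 + length g2" using l1 by (simp add: E12_def eval_gates_length)
  have u1: "u1 < length E1" using comp_out[of L f1] go1 l1 by simp
  obtain ws2 where e12: "E12 = E1 @ ws2" using eval_gates_prefix unfolding E12_def by blast
  obtain ws1 where e1: "E1 = ws @ ws1" using eval_gates_prefix unfolding E1_def by blast
  have v1: "wire E12 u1 = feval x ws f1"
    using FOr.IH(1)[of ws L] FOr.prems go1 u1 e12 by (simp add: E1_def wire_append)
  have v2: "wire E12 u2 = feval x ws f2"
    using FOr.IH(2)[of E1 "L + length g1"] FOr.prems go2 l1 fok_mono[of L f2 "L + length g1"]
      feval_prefix[of ws f2 x ws1] e1 by (simp add: E12_def)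
  show ?case using go1 go2 v1 v2 l12
    by (simp add: eval_gates_append E12_def[symmetric] E1_def[symmetric] wire_def nth_append)
qed


definition G0 :: "circuit \<Rightarrow> circuit \<Rightarrow> nat \<Rightarrow> gate list" where
  "G0 Cf Cb K = map (shiftg 0 K) (fst Cf) @ map (shiftg (length (fst Cf)) K) (fst Cb)"

lemma eval_G0: "eval_gates (G0 Cf Cb K) z [] =
   eval_gates (fst Cf) (drop K z) [] @ eval_gates (fst Cb) (drop K z) []"
proof -
  have 1: "eval_gates (map (shiftg 0 K) (fst Cf)) z ([] @ []) = [] @ eval_gates (fst Cf) (drop K z) []"
    by (rule eval_shift) simp
  have l: "length (eval_gates (fst Cf) (drop K z) []) = length (fst Cf)" by (simp add: eval_gates_length)
  have 2: "eval_gates (map (shiftg (length (fst Cf)) K) (fst Cb)) z (eval_gates (fst Cf) (drop K z) [] @ [])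
     = eval_gates (fst Cf) (drop K z) [] @ eval_gates (fst Cb) (drop K z) []"
    by (rule eval_shift) (simp add: l)
  show ?thesis using 1 2 by (simp add: G0_def eval_gates_append)
qed

definition fo :: "circuit \<Rightarrow> nat \<Rightarrow> fm" where
  "fo Cf j = (if snd Cf ! j < length (fst Cf) then FW (snd Cf ! j) else FC False)"

definition bfm :: "circuit \<Rightarrow> circuit \<Rightarrow> fm" where
  "bfm Cf Cb = (case snd Cb of [u] \<Rightarrow> if u < length (fst Cb) then FW (length (fst Cf) + u) else FC False
               | _ \<Rightarrow> FC False)"

definition eqf :: "circuit \<Rightarrow> nat \<Rightarrow> fm" where
  "eqf Cf j = FOr (FAnd (fo Cf j) (FIn j)) (FAnd (FNot (fo Cf j)) (FNot (FIn j)))"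

definition bigand :: "fm list \<Rightarrow> fm" where
  "bigand fs = foldr FAnd fs (FC True)"

definition EQ :: "circuit \<Rightarrow> nat \<Rightarrow> fm" where
  "EQ Cf K = bigand (map (eqf Cf) [0..<K])"

definition mkC :: "circuit \<Rightarrow> circuit \<Rightarrow> nat \<Rightarrow> fm \<Rightarrow> circuit" where
  "mkC Cf Cb K tp = (G0 Cf Cb K @ fst (comp (length (fst Cf) + length (fst Cb)) tp),
                      [snd (comp (length (fst Cf) + length (fst Cb)) tp)])"

lemma feval_bigand: "feval z ws (bigand fs) = (\<forall>f\<in>set fs. feval z ws f)"
  by (induction fs) (auto simp: bigand_def)

lemma fok_bigand: "fok L (bigand fs) = (\<forall>f\<in>set fs. fok L f)"
  by (induction fs) (auto simp: bigand_def)

lemma fsize_bigand: "fsize (bigand fs) = sum_list (map fsize fs) + length fs + 1"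
  by (induction fs) (auto simp: bigand_def)

lemma fsize_eqf: "fsize (eqf Cf j) = 9"
  by (simp add: eqf_def fo_def)

lemma fsize_EQ: "fsize (EQ Cf K) = 10 * K + 1"
proof -
  have "sum_list (map fsize (map (eqf Cf) [0..<K])) = 9 * K"
    by (simp add: fsize_eqf o_def sum_list_triv)
  then show ?thesis by (simp add: EQ_def fsize_bigand)
qed

lemma fok_fo: "fok (length (fst Cf) + Lb) (fo Cf j)"
  by (simp add: fo_def)

lemma fok_EQ: "fok (length (fst Cf) + Lb) (EQ Cf K)"
  by (auto simp: EQ_def fok_bigand eqf_def fok_fo)

lemma fok_bfm: "fok (length (fst Cf) + length (fst Cb)) (bfm Cf Cb)"
  by (auto simp: bfm_def split: list.split)

lemma size_mkC: "circuit_size (mkC Cf Cb K tp) \<le> circuit_size Cf + circuit_size Cb + fsize tp + 1"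
  using comp_size[of "length (fst Cf) + length (fst Cb)" tp]
  by (simp add: mkC_def circuit_size_def G0_def)

lemma cbit_mkC:
  assumes "fok (length (fst Cf) + length (fst Cb)) tp"
  shows "cbit (mkC Cf Cb K tp) z =
    feval z (eval_gates (fst Cf) (drop K z) [] @ eval_gates (fst Cb) (drop K z) []) tp"
proof -
  let ?E0 = "eval_gates (fst Cf) (drop K z) [] @ eval_gates (fst Cb) (drop K z) []"
  have l: "length ?E0 = length (fst Cf) + length (fst Cb)" by (simp add: eval_gates_length)
  have "wire (eval_gates (fst (comp (length (fst Cf) + length (fst Cb)) tp)) z ?E0)
      (snd (comp (length (fst Cf) + length (fst Cb)) tp)) = feval z ?E0 tp"
    by (rule comp_correct) (use l assms in auto)
  then show ?thesis
    by (simp add: cbit_def eval_circuit_def mkC_def eval_gates_append eval_G0)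
qed

lemma feval_fo:
  assumes "length wsf = length (fst Cf)"
  shows "feval z (wsf @ wsb) (fo Cf j) = wire wsf (snd Cf ! j)"
  using assms by (auto simp: fo_def wire_append wire_ge)

lemma feval_bfm:
  assumes "length wsf = length (fst Cf)" "length wsb = length (fst Cb)"
  shows "feval z (wsf @ wsb) (bfm Cf Cb) = (map (wire wsb) (snd Cb) = [True])"
proof (cases "snd Cb")
  case (Cons u us)
  then show ?thesis using assms
    by (cases us) (auto simp: bfm_def wire_def nth_append)
qed (simp add: bfm_def)

lemma feval_EQ:
  assumes "length wsf = length (fst Cf)" "length y = K"
    and "map (wire wsf) (snd Cf) = fw" "length fw = K"
  shows "feval (y @ w) (wsf @ wsb) (EQ Cf K) = (fw = y)"
proof -
  have "feval (y @ w) (wsf @ wsb) (EQ Cf K) = (\<forall>j<K. wire wsf (snd Cf ! j) = y ! j)"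
    using assms(1,2) by (auto simp: EQ_def feval_bigand eqf_def feval_fo nth_append)
  also have "\<dots> = (\<forall>j<K. fw ! j = y ! j)"
    using assms(3,4) by auto
  also have "\<dots> = (fw = y)" using assms(2,4) by (auto simp: list_eq_iff_nth_eq)
  finally show ?thesis .
qed

lemma sem:
  assumes "length y = K" "eval_circuit Cf w = fw" "length fw = K"
  shows "cbit (mkC Cf Cb K (FAnd (EQ Cf K) (bfm Cf Cb))) (y @ w) = (fw = y \<and> cbit Cb w)"
    and "cbit (mkC Cf Cb K (FNot (FAnd (EQ Cf K) (FNot (bfm Cf Cb))))) (y @ w) = (\<not> (fw = y \<and> \<not> cbit Cb w))"
proof -
  let ?wsf = "eval_gates (fst Cf) w []" and ?wsb = "eval_gates (fst Cb) w []"
  have d: "drop K (y @ w) = w" using assms(1) by simp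
  have l1: "length ?wsf = length (fst Cf)" and l2: "length ?wsb = length (fst Cb)"
    by (simp_all add: eval_gates_length)
  have e: "feval (y @ w) (?wsf @ ?wsb) (EQ Cf K) = (fw = y)"
    by (rule feval_EQ) (use assms l1 in \<open>auto simp: eval_circuit_def\<close>)
  have b: "feval (y @ w) (?wsf @ ?wsb) (bfm Cf Cb) = cbit Cb w"
    using feval_bfm[OF l1 l2] by (simp add: cbit_def eval_circuit_def)
  have f1: "fok (length (fst Cf) + length (fst Cb)) (FAnd (EQ Cf K) (bfm Cf Cb))"
    by (simp add: fok_EQ fok_bfm)
  have f2: "fok (length (fst Cf) + length (fst Cb)) (FNot (FAnd (EQ Cf K) (FNot (bfm Cf Cb))))"
    by (simp add: fok_EQ fok_bfm)
  show "cbit (mkC Cf Cb K (FAnd (EQ Cf K) (bfm Cf Cb))) (y @ w) = (fw = y \<and> cbit Cb w)"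
    using e b unfolding cbit_mkC[OF f1] d by simp
  show "cbit (mkC Cf Cb K (FNot (FAnd (EQ Cf K) (FNot (bfm Cf Cb))))) (y @ w) = (\<not> (fw = y \<and> \<not> cbit Cb w))"
    using e b unfolding cbit_mkC[OF f2] d by simp
qed


lemma pb_add:
  assumes "poly_bounded q1" "poly_bounded q2"
  shows "poly_bounded (\<lambda>n. q1 n + q2 n)"
proof -
  obtain k1 where k1: "\<forall>n. q1 n \<le> n ^ k1 + k1" using assms(1) by (auto simp: poly_bounded_def)
  obtain k2 where k2: "\<forall>n. q2 n \<le> n ^ k2 + k2" using assms(2) by (auto simp: poly_bounded_def)
  define k where "k = max k1 k2"
  have "q1 n + q2 n \<le> n ^ (2 * k + 2) + (2 * k + 2)" for n
  proof (cases "n \<le> 1")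
    case True
    have "n ^ k1 \<le> 1 ^ k1" "n ^ k2 \<le> 1 ^ k2" using True by (intro power_mono; simp)+
    then have "n ^ k1 \<le> 1" "n ^ k2 \<le> 1" by simp_all
    then have "q1 n \<le> 1 + k1" "q2 n \<le> 1 + k2" using spec[OF k1, of n] spec[OF k2, of n] by linarith+
    moreover have "k1 \<le> k" "k2 \<le> k" by (auto simp: k_def)
    ultimately show ?thesis by linarith
  next
    case False
    then have n2: "n \<ge> 2" by simp
    have "n ^ k1 \<le> n ^ k" "n ^ k2 \<le> n ^ k" using n2 by (auto simp: k_def intro: power_increasing)
    moreover have "2 * n ^ k \<le> n ^ (k + 1)" using n2 by simp
    moreover have "n ^ (k + 1) \<le> n ^ (2 * k + 2)" using n2 by (intro power_increasing) auto
    moreover have "k1 \<le> k" "k2 \<le> k" by (auto simp: k_def)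
    ultimately show ?thesis using spec[OF k1, of n] spec[OF k2, of n] by linarith
  qed
  then show ?thesis unfolding poly_bounded_def by blast
qed

lemma pb_lin: "poly_bounded (\<lambda>n. a * n + b)"
proof -
  have "a * n + b \<le> n ^ (a + b + 1) + (a + b + 1)" for n
  proof (cases "n \<le> 1")
    case True then have "n = 0 \<or> n = 1" by auto
    then show ?thesis by (elim disjE) simp_all
  next
    case False
    then have n2: "n \<ge> 2" by simp
    have "a < 2 ^ a" by (rule less_exp)
    also have "\<dots> \<le> n ^ a" using n2 by (rule power_mono) simp
    finally have "a * n \<le> n ^ a * n" by simp
    also have "\<dots> = n ^ (a + 1)" by simp
    also have "\<dots> \<le> n ^ (a + b + 1)" using n2 by (intro power_increasing) auto
    finally have "a * n \<le> n ^ (a + b + 1)" .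
    then show ?thesis by linarith
  qed
  then show ?thesis unfolding poly_bounded_def by blast
qed

lemma pb_mono: "poly_bounded q' \<Longrightarrow> (\<And>n. q n \<le> q' n) \<Longrightarrow> poly_bounded q"
  unfolding poly_bounded_def by (meson le_trans)

lemma arith_key:
  fixes t a P X Y :: real
  assumes "t \<ge> a / (a + 1) + 1 / P" "a > 0" "P > 0" "X + Y \<ge> t + t / a"
  shows "X \<ge> 1/2 + 1 / (2 * P) \<or> Y \<ge> 1/2 + 1 / (2 * P)"
proof -
  have "t + t / a = t * ((a + 1) / a)" using assms(2) by (simp add: field_simps)
  also have "\<dots> \<ge> (a / (a + 1) + 1 / P) * ((a + 1) / a)"
    using assms(1,2) by (intro mult_right_mono) auto
  finally have 1: "t + t / a \<ge> (a / (a + 1) + 1 / P) * ((a + 1) / a)" .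
  have "(a / (a + 1) + 1 / P) * ((a + 1) / a) = 1 + (a + 1) / (a * P)"
  proof -
    have "a + 1 \<noteq> 0" "a \<noteq> 0" "a + a * a \<noteq> 0" using assms(2) by (auto, smt (verit) mult_pos_pos)
    then have "a / (a + 1) * ((a + 1) / a) = 1" by (simp add: field_simps)
    moreover have "1 / P * ((a + 1) / a) = (a + 1) / (a * P)" by simp
    ultimately show ?thesis by (metis distrib_right)
  qed
  also have "(a + 1) / (a * P) \<ge> 1 / P"
    using assms(2,3) by (simp add: field_simps)
  ultimately have "X + Y \<ge> 1 + 1 / P" using 1 assms(4) by linarith
  moreover have "1 / (2 * P) = (1 / P) / 2" by simp
  ultimately show ?thesis by linarith
qed


lemma fsize_bfm: "fsize (bfm Cf Cb) = 1"
  by (auto simp: bfm_def split: list.split)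

lemma fin_bs: "finite (bitstrings k)"
proof -
  have "bitstrings k = {xs. set xs \<subseteq> (UNIV :: bool set) \<and> length xs = k}" by (auto simp: bitstrings_def)
  then show ?thesis using finite_lists_length_eq[of "UNIV :: bool set" k] by simp
qed

lemma T1_uniq:
  assumes "x \<in> T1 f n" "w \<in> bitstrings n" "f w = f x"
  shows "w = x"
proof -
  have x: "x \<in> bitstrings n" and c: "card {x' \<in> bitstrings n. f x' = f x} = 1"
    using assms(1) by (auto simp: T1_def)
  from c obtain a where "{x' \<in> bitstrings n. f x' = f x} = {a}" by (rule card_1_singletonE)
  moreover have "x \<in> {x' \<in> bitstrings n. f x' = f x}" "w \<in> {x' \<in> bitstrings n. f x' = f x}"
    using x assms by auto
  ultimately show ?thesis by auto
qed

theorem theorem6p7: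
  fixes f :: "bool list \<Rightarrow> bool list" and c :: nat
  assumes "\<forall>x. length (f x) = length x + c"
    and "poly_circuit_fun f"
    and "\<exists>p. pos_poly p \<and> infinite {n.
           real (card (T1 f n)) / 2 ^ n
             \<ge> 2 ^ (1 + c) / (2 ^ (1 + c) + 1) + 1 / real (p n)}"
  shows "\<not> (\<exists>b. super_core b f (\<lambda>n. n + c))"
proof
  assume "\<exists>b. super_core b f (\<lambda>n. n + c)"
  then obtain b where sc: "super_core b f (\<lambda>n. n + c)" by blast
  then have pcb: "poly_circuit_pred b" by (simp add: super_core_def)
  obtain qf where qf: "poly_bounded qf" and qf2: "\<forall>n. \<exists>C. circuit_size C \<le> qf n \<and>
      (\<forall>x\<in>bitstrings n. eval_circuit C x = f x)"
    using assms(2) unfolding poly_circuit_fun_def by blast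
  then obtain CF where CF: "\<And>n. circuit_size (CF n) \<le> qf n \<and> (\<forall>x\<in>bitstrings n. eval_circuit (CF n) x = f x)"
    by metis
  obtain qb where qb: "poly_bounded qb" and qb2: "\<forall>n. \<exists>C. circuit_size C \<le> qb n \<and>
      (\<forall>x\<in>bitstrings n. cbit C x = b x)"
    using pcb unfolding poly_circuit_pred_def by blast
  then obtain CB where CB: "\<And>n. circuit_size (CB n) \<le> qb n \<and> (\<forall>x\<in>bitstrings n. cbit (CB n) x = b x)"
    by metis
  obtain p where pp: "pos_poly p" and inf: "infinite {n.
           real (card (T1 f n)) / 2 ^ n
             \<ge> 2 ^ (1 + c) / (2 ^ (1 + c) + 1) + 1 / real (p n)}" using assms(3) by blast
  define A1 where "A1 n = mkC (CF n) (CB n) (n + c) (FAnd (EQ (CF n) (n + c)) (bfm (CF n) (CB n)))" for n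
  define A2 where "A2 n = mkC (CF n) (CB n) (n + c) (FNot (FAnd (EQ (CF n) (n + c)) (FNot (bfm (CF n) (CB n)))))" for n
  define wl :: "nat \<Rightarrow> nat" where "wl n = n" for n
  define p2 where "p2 n = 2 * p n" for n
  have lenf: "length (f w) = n + c" if "w \<in> bitstrings n" for w n
    using assms(1) that by (simp add: bitstrings_def)
  have sem1: "cbit (A1 n) (y @ w) = (f w = y \<and> b w)" if "length y = n + c" "w \<in> bitstrings n" for n y w
    using sem(1)[of y "n + c" "CF n" w "f w" "CB n"] that CF[of n] CB[of n] lenf[OF that(2)]
    by (simp add: A1_def)
  have sem2: "cbit (A2 n) (y @ w) = (\<not> (f w = y \<and> \<not> b w))" if "length y = n + c" "w \<in> bitstrings n" for n y w
    using sem(2)[of y "n + c" "CF n" w "f w" "CB n"] that CF[of n] CB[of n] lenf[OF that(2)]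
    by (simp add: A2_def)
  have pbq: "poly_bounded (\<lambda>n. (qf n + qb n) + (10 * n + (10 * c + 6)))"
    by (intro pb_add qf qb pb_lin)
  have fam1: "poly_family A1" unfolding poly_family_def
  proof (rule pb_mono[OF pbq])
    fix n
    have "circuit_size (A1 n) \<le> circuit_size (CF n) + circuit_size (CB n) + fsize (FAnd (EQ (CF n) (n + c)) (bfm (CF n) (CB n))) + 1"
      unfolding A1_def by (rule size_mkC)
    then show "circuit_size (A1 n) \<le> (qf n + qb n) + (10 * n + (10 * c + 6))"
      using CF[of n] CB[of n] by (simp add: fsize_EQ fsize_bfm)
  qed
  have fam2: "poly_family A2" unfolding poly_family_def
  proof (rule pb_mono[OF pbq])
    fix n
    have "circuit_size (A2 n) \<le> circuit_size (CF n) + circuit_size (CB n) + fsize (FNot (FAnd (EQ (CF n) (n + c)) (FNot (bfm (CF n) (CB n))))) + 1"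
      unfolding A2_def by (rule size_mkC)
    then show "circuit_size (A2 n) \<le> (qf n + qb n) + (10 * n + (10 * c + 6))"
      using CF[of n] CB[of n] by (simp add: fsize_EQ fsize_bfm)
  qed
  have pp2: "pos_poly p2"
  proof -
    have "poly_bounded (\<lambda>n. p n + p n)" using pp by (intro pb_add) (auto simp: pos_poly_def)
    moreover have "p2 = (\<lambda>n. p n + p n)" by (auto simp: p2_def)
    ultimately have "poly_bounded p2" by simp
    then show ?thesis using pp by (auto simp: pos_poly_def p2_def)
  qed
  let ?S = "{n.
             prob_unif n (\<lambda>x. \<not> nd_accept A1 wl n (f x) \<and> \<not> b x)
               + 1/2 * prob_unif (n + c) (\<lambda>y. nd_accept A1 wl n y)
               \<ge> 1/2 + 1 / real (p2 n)
           \<or> prob_unif n (\<lambda>x. cond_accept A2 wl n (f x) \<and> b x)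
               + 1/2 * prob_unif (n + c) (\<lambda>y. \<not> cond_accept A2 wl n y)
               \<ge> 1/2 + 1 / real (p2 n)}"
  have sub: "{n. real (card (T1 f n)) / 2 ^ n
             \<ge> 2 ^ (1 + c) / (2 ^ (1 + c) + 1) + 1 / real (p n)} \<subseteq> ?S"
  proof
    fix n assume "n \<in> {n. real (card (T1 f n)) / 2 ^ n
             \<ge> 2 ^ (1 + c) / (2 ^ (1 + c) + 1) + 1 / real (p n)}"
    then have hyp: "real (card (T1 f n)) / 2 ^ n \<ge> 2 ^ (1 + c) / (2 ^ (1 + c) + 1) + 1 / real (p n)"
      by simp
    define S where "S = bitstrings n"
    define T where "T = T1 f n"
    define B1 where "B1 = {x \<in> S. b x}"
    define B0 where "B0 = {x \<in> S. \<not> b x}"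
    have finS: "finite S" by (simp add: S_def fin_bs)
    have TS: "T \<subseteq> S" by (auto simp: T_def S_def T1_def)
    have finT: "finite T" using TS finS finite_subset by blast
    have nd: "nd_accept A1 wl n y = (\<exists>w\<in>S. f w = y \<and> b w)" if "length y = n + c" for y
      using sem1[OF that] by (auto simp: nd_accept_def wl_def S_def)
    have cd: "cond_accept A2 wl n y = (\<not> (\<exists>w\<in>S. f w = y \<and> \<not> b w))" if "length y = n + c" for y
      using sem2[OF that] by (auto simp: cond_accept_def wl_def S_def)
    have fS: "length (f x) = n + c" if "x \<in> S" for x using lenf that by (simp add: S_def)
    have set1: "T \<inter> {x. \<not> b x} \<subseteq> {x \<in> S. \<not> nd_accept A1 wl n (f x) \<and> \<not> b x}"
    proof
      fix x assume x: "x \<in> T \<inter> {x. \<not> b x}"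
      then have xS: "x \<in> S" using TS by auto
      have "\<not> nd_accept A1 wl n (f x)"
        using x T1_uniq[of x f n] by (auto simp: nd[OF fS[OF xS]] T_def S_def)
      then show "x \<in> {x \<in> S. \<not> nd_accept A1 wl n (f x) \<and> \<not> b x}" using x xS by auto
    qed
    have set2: "T \<inter> {x. b x} \<subseteq> {x \<in> S. cond_accept A2 wl n (f x) \<and> b x}"
    proof
      fix x assume x: "x \<in> T \<inter> {x. b x}"
      then have xS: "x \<in> S" using TS by auto
      have "cond_accept A2 wl n (f x)"
        using x T1_uniq[of x f n] by (auto simp: cd[OF fS[OF xS]] T_def S_def)
      then show "x \<in> {x \<in> S. cond_accept A2 wl n (f x) \<and> b x}" using x xS by auto
    qed
    have img1: "{y \<in> bitstrings (n + c). nd_accept A1 wl n y} = f ` B1"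
      using fS by (auto simp: nd bitstrings_def B1_def)
    have img2: "{y \<in> bitstrings (n + c). \<not> cond_accept A2 wl n y} = f ` B0"
      using fS by (auto simp: cd bitstrings_def B0_def)
    have c1: "card (T \<inter> {x. \<not> b x}) \<le> card {x \<in> S. \<not> nd_accept A1 wl n (f x) \<and> \<not> b x}"
      by (rule card_mono[OF _ set1]) (simp add: finS)
    have c2: "card (T \<inter> {x. b x}) \<le> card {x \<in> S. cond_accept A2 wl n (f x) \<and> b x}"
      by (rule card_mono[OF _ set2]) (simp add: finS)
    have cT: "card T = card (T \<inter> {x. b x}) + card (T \<inter> {x. \<not> b x})"
    proof -
      have "card ((T \<inter> {x. b x}) \<union> (T \<inter> {x. \<not> b x})) = card (T \<inter> {x. b x}) + card (T \<inter> {x. \<not> b x})"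
        by (rule card_Un_disjoint) (use finT in auto)
      moreover have "(T \<inter> {x. b x}) \<union> (T \<inter> {x. \<not> b x}) = T" by auto
      ultimately show ?thesis by simp
    qed
    have inj: "inj_on f T"
    proof (rule inj_onI)
      fix x y assume xy: "x \<in> T" "y \<in> T" "f x = f y"
      then have "y \<in> bitstrings n" using TS by (auto simp: S_def)
      then show "x = y" using T1_uniq[of x f n y] xy by (simp add: T_def)
    qed
    have cimg: "card T \<le> card (f ` B1) + card (f ` B0)"
    proof -
      have "card T = card (f ` T)" using inj by (simp add: card_image)
      also have "\<dots> \<le> card (f ` B1 \<union> f ` B0)"
        by (rule card_mono) (use TS finS in \<open>auto simp: B1_def B0_def\<close>)
      also have "\<dots> \<le> card (f ` B1) + card (f ` B0)" by (rule card_Un_le)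
      finally show ?thesis .
    qed
    define X where "X = prob_unif n (\<lambda>x. \<not> nd_accept A1 wl n (f x) \<and> \<not> b x)
               + 1/2 * prob_unif (n + c) (\<lambda>y. nd_accept A1 wl n y)"
    define Y where "Y = prob_unif n (\<lambda>x. cond_accept A2 wl n (f x) \<and> b x)
               + 1/2 * prob_unif (n + c) (\<lambda>y. \<not> cond_accept A2 wl n y)"
    have X: "X \<ge> real (card (T \<inter> {x. \<not> b x})) / 2 ^ n + 1/2 * (real (card (f ` B1)) / 2 ^ (n + c))"
      using c1 unfolding X_def prob_unif_def img1 S_def[symmetric]
      by (simp add: divide_right_mono)
    have Y: "Y \<ge> real (card (T \<inter> {x. b x})) / 2 ^ n + 1/2 * (real (card (f ` B0)) / 2 ^ (n + c))"
      using c2 unfolding Y_def prob_unif_def img2 S_def[symmetric]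
      by (simp add: divide_right_mono)
    define t where "t = real (card T) / 2 ^ n"
    define a :: real where "a = 2 ^ (1 + c)"
    have e1: "real (card T) / 2 ^ n = real (card (T \<inter> {x. b x})) / 2 ^ n + real (card (T \<inter> {x. \<not> b x})) / 2 ^ n"
      unfolding cT by (simp add: add_divide_distrib)
    have e2: "1/2 * (real (card (f ` B1) + card (f ` B0)) / 2 ^ (n + c)) = 1/2 * (real (card (f ` B1)) / 2 ^ (n + c)) + 1/2 * (real (card (f ` B0)) / 2 ^ (n + c))"
      by (simp add: add_divide_distrib distrib_left)
    have "X + Y \<ge> real (card T) / 2 ^ n + 1/2 * (real (card (f ` B1) + card (f ` B0)) / 2 ^ (n + c))"
      using X Y e1 e2 by linarith
    moreover have "1/2 * (real (card (f ` B1) + card (f ` B0)) / 2 ^ (n + c)) \<ge> 1/2 * (real (card T) / 2 ^ (n + c))"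
      using cimg by (simp add: divide_right_mono)
    moreover have "1/2 * (real (card T) / 2 ^ (n + c)) = t / a"
      by (simp add: t_def a_def power_add)
    ultimately have XY: "X + Y \<ge> t + t / a" unfolding t_def by linarith
    have "X \<ge> 1/2 + 1 / (2 * real (p n)) \<or> Y \<ge> 1/2 + 1 / (2 * real (p n))"
      by (rule arith_key[OF _ _ _ XY]) (use hyp pp in \<open>auto simp: t_def a_def T_def pos_poly_def\<close>)
    then show "n \<in> ?S" by (simp add: X_def Y_def p2_def)
  qed
  have "infinite ?S" using inf sub finite_subset by blast
  then show False using sc fam1 fam2 pp2 unfolding super_core_def by blast
qed

end
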